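(* Let $E$ be a finite set and $\underline I=(I_\omega)_{\omega\in E}$ a family of non-empty finite sets. For any two causal orders $\Omega$ and $\Xi$ on $E$, $\Omega\le\Xi$ if and only if $\mathrm{ExtHist}(\Omega,\underline I)\supseteq\mathrm{ExtHist}(\Xi,\underline I)$.
   Context: A causal order $\Omega$ on $E$ is a preorder $\le_\Omega$ on $E$; $\Omega\le\Xi$ iff $\le_\Omega\subseteq\le_\Xi$. $\Lambda(\Omega)$ is the set of lowersets (subsets $U$ with $\xi\le_\Omega\omega\in U\Rightarrow\xi\in U$). $\mathrm{ExtHist}(\Omega,\underline I)=\bigcup_{U\in\Lambda(\Omega)}\prod_{\omega\in U}I_\omega$, i.e. all functions with domain a lowerset $U$ of $\Omega$ and values $f(\omega)\in I_\omega$. *)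

theory Defs
  imports Main
begin

text \<open>A causal order on E is a preorder on E, represented as a relation
  R \<subseteq> E \<times> E, where (x, y) \<in> R means x \<le> y.\<close>
definition causal_order :: "'e set \<Rightarrow> 'e rel \<Rightarrow> bool" where
  "causal_order E R \<longleftrightarrow> preorder_on E R"

definition lowersets :: "'e set \<Rightarrow> 'e rel \<Rightarrow> 'e set set" where
  "lowersets E R = {U. U \<subseteq> E \<and> (\<forall>x w. (x, w) \<in> R \<longrightarrow> w \<in> U \<longrightarrow> x \<in> U)}"

definition ExtHist :: "'e set \<Rightarrow> 'e rel \<Rightarrow> ('e \<Rightarrow> 'v set) \<Rightarrow> ('e \<rightharpoonup> 'v) set" where
  "ExtHist E R I = (\<Union>U\<in>lowersets E R.
      {f. dom f = U \<and> (\<forall>w\<in>U. the (f w) \<in> I w)})"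

end

theory Submission
  imports Defs
begin

theorem proposition5:
  fixes E :: "'e set" and I :: "'e \<Rightarrow> 'v set" and \<Omega> \<Xi> :: "'e rel"
  assumes "finite E"
    and "\<And>w. w \<in> E \<Longrightarrow> finite (I w) \<and> I w \<noteq> {}"
    and "causal_order E \<Omega>" and "causal_order E \<Xi>"
  shows "\<Omega> \<subseteq> \<Xi> \<longleftrightarrow> ExtHist E \<Xi> I \<subseteq> ExtHist E \<Omega> I"
proof
  assume "\<Omega> \<subseteq> \<Xi>"
  then have "lowersets E \<Xi> \<subseteq> lowersets E \<Omega>"
    unfolding lowersets_def by blast
  then show "ExtHist E \<Xi> I \<subseteq> ExtHist E \<Omega> I"
    unfolding ExtHist_def by blast
next
  assume H: "ExtHist E \<Xi> I \<subseteq> ExtHist E \<Omega> I"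
  have O: "\<Omega> \<subseteq> E \<times> E" and X: "\<Xi> \<subseteq> E \<times> E" "refl_on E \<Xi>" "trans \<Xi>"
    using assms(3,4) unfolding causal_order_def preorder_on_def by auto
  show "\<Omega> \<subseteq> \<Xi>"
  proof
    fix p assume p: "p \<in> \<Omega>"
    obtain x w where pw: "p = (x, w)" by (cases p)
    have wE: "w \<in> E" using O p pw by auto
    define U where "U = {y. (y, w) \<in> \<Xi>}"
    define f where "f = (\<lambda>y. if y \<in> U then Some (SOME v. v \<in> I y) else None)"
    have UL: "U \<in> lowersets E \<Xi>"
      unfolding lowersets_def U_def using X(1) X(3) by (auto dest: transD)
    have dom: "dom f = U" unfolding f_def dom_def by auto
    have "\<forall>y\<in>U. the (f y) \<in> I y"
    proof
      fix y assume "y \<in> U"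
      then have "y \<in> E" using X(1) unfolding U_def by auto
      then have "I y \<noteq> {}" using assms(2) by blast
      then show "the (f y) \<in> I y" using \<open>y \<in> U\<close> unfolding f_def by (simp add: some_in_eq)
    qed
    then have "f \<in> ExtHist E \<Xi> I" unfolding ExtHist_def using UL dom by blast
    then have "f \<in> ExtHist E \<Omega> I" using H by blast
    then have "U \<in> lowersets E \<Omega>" unfolding ExtHist_def using dom by auto
    moreover have "w \<in> U" using X(2) wE unfolding U_def refl_on_def by auto
    ultimately have "x \<in> U" using p pw unfolding lowersets_def by blast
    then show "p \<in> \<Xi>" using pw U_def by simp
  qed
qed

end
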